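(* Let $L$ be an extension of $\mathbb{Z}_\mathrm{max}$ with $\mathrm{ui}(L/\mathbb{Z}_\mathrm{max})<\infty$. Then $L\cong F^{(n)}$ as extensions of $\mathbb{Z}_\mathrm{max}$ for some positive integer $n$.
   Context: A semifield is a commutative semiring (both operations commutative monoids, distributive law) in which every nonzero element is a unit. $\mathbb{Z}_\mathrm{max}=\mathbb{Z}\cup\{-\infty\}$ is the semifield with addition $\max$ and multiplication ordinary addition; writing $u$ for the integer $1$ in it, $\mathbb{Z}_\mathrm{max}=\{0\}\cup\{u^k:k\in\mathbb{Z}\}$. An extension of a semifield $K$ is a semifield $L$ with an injective homomorphism $K\to L$. The unit index is $\mathrm{ui}(L/K)=|L^\times/K^\times|$. For a positive integer $n$, $F^{(n)}$ is the extension of $\mathbb{Z}_\mathrm{max}$ given by $\mathbb{Z}_\mathrm{max}$ itself with embedding $u^k\mapsto u^{nk}$, $0\mapsto 0$. An isomorphism of extensions is a semiring isomorphism compatible with the embeddings. *)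

theory Defs
  imports "HOL-Algebra.Algebra"
begin

definition semifield :: "('a, 'b) ring_scheme \<Rightarrow> bool" where
  "semifield R \<longleftrightarrow> semiring R \<and> comm_monoid R \<and>
     (\<forall>x\<in>carrier R. x \<noteq> \<zero>\<^bsub>R\<^esub> \<longrightarrow> x \<in> Units R)"

definition semiring_hom :: "('a, 'c) ring_scheme \<Rightarrow> ('b, 'd) ring_scheme \<Rightarrow> ('a \<Rightarrow> 'b) set" where
  "semiring_hom R S = {h. h \<in> ring_hom R S \<and> h \<zero>\<^bsub>R\<^esub> = \<zero>\<^bsub>S\<^esub>}"

text \<open>Z_max = Z with -infinity (None); element Some k is u^k.\<close>
fun zmax_add :: "int option \<Rightarrow> int option \<Rightarrow> int option" where
  "zmax_add None y = y"
| "zmax_add x None = x"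
| "zmax_add (Some a) (Some b) = Some (max a b)"

fun zmax_mult :: "int option \<Rightarrow> int option \<Rightarrow> int option" where
  "zmax_mult (Some a) (Some b) = Some (a + b)"
| "zmax_mult _ _ = None"

definition Zmax :: "int option ring" where
  "Zmax = \<lparr>carrier = UNIV, monoid.mult = zmax_mult, one = Some 0,
           ring.zero = None, ring.add = zmax_add\<rparr>"

definition semifield_ext :: "('a, 'c) ring_scheme \<Rightarrow> ('b, 'd) ring_scheme \<Rightarrow> ('a \<Rightarrow> 'b) \<Rightarrow> bool" where
  "semifield_ext K L h \<longleftrightarrow> semifield K \<and> semifield L \<and> h \<in> semiring_hom K L \<and> inj_on h (carrier K)"

text \<open>The cosets L^x / h(K^x); the unit index ui(L/K) is their number.\<close>
definition unit_cosets :: "('a, 'c) ring_scheme \<Rightarrow> ('b, 'd) ring_scheme \<Rightarrow> ('a \<Rightarrow> 'b) \<Rightarrow> 'b set set" where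
  "unit_cosets K L h = rcosets\<^bsub>units_of L\<^esub> (h ` Units K)"

definition Fn_emb :: "int \<Rightarrow> int option \<Rightarrow> int option" where
  "Fn_emb n x = map_option (\<lambda>k. n * k) x"

definition ext_iso :: "('a, 'c) ring_scheme \<Rightarrow> ('b, 'd) ring_scheme \<Rightarrow> ('a \<Rightarrow> 'b)
     \<Rightarrow> ('e, 'f) ring_scheme \<Rightarrow> ('a \<Rightarrow> 'e) \<Rightarrow> ('b \<Rightarrow> 'e) \<Rightarrow> bool" where
  "ext_iso K L h L' h' \<phi> \<longleftrightarrow> \<phi> \<in> semiring_hom L L' \<and> bij_betw \<phi> (carrier L) (carrier L') \<and>
     (\<forall>x\<in>carrier K. \<phi> (h x) = h' x)"

end

theory Submission
  imports Defs
begin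

lemma Zmax_simps [simp]:
  "carrier Zmax = UNIV" "monoid.mult Zmax = zmax_mult" "one Zmax = Some 0"
  "ring.zero Zmax = None" "ring.add Zmax = zmax_add"
  by (simp_all add: Zmax_def)

lemma Units_Zmax: "Units Zmax = range Some"
proof -
  have "x \<in> Units Zmax \<longleftrightarrow> x \<in> range Some" for x
  proof (cases x)
    case None
    have "zmax_mult y None \<noteq> Some 0" for y by (cases y) auto
    then show ?thesis using None by (auto simp: Units_def)
  next
    case (Some k)
    then show ?thesis
      by (auto simp: Units_def intro!: exI[of _ "Some (-k)"])
  qed
  then show ?thesis by blast
qed

primrec psum :: "('a, 'b) ring_scheme \<Rightarrow> 'a \<Rightarrow> nat \<Rightarrow> 'a" where
  "psum R x 0 = \<zero>\<^bsub>R\<^esub>"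
| "psum R x (Suc k) = psum R x k \<oplus>\<^bsub>R\<^esub> x [^]\<^bsub>R\<^esub> k"

locale zctx =
  fixes L (structure) and h :: "int option \<Rightarrow> 'a"
  assumes ext: "semifield_ext Zmax L h"
    and fin: "finite (unit_cosets Zmax L h)"
begin

lemma sr: "semiring L" and cm: "comm_monoid L"
  and nzU: "\<And>x. x \<in> carrier L \<Longrightarrow> x \<noteq> \<zero> \<Longrightarrow> x \<in> Units L"
  using ext by (auto simp: semifield_ext_def semifield_def)

lemma hhom: "h \<in> ring_hom Zmax L" and h0: "h None = \<zero>" and hinj: "inj h"
  using ext by (auto simp: semifield_ext_def semiring_hom_def)

end

sublocale zctx \<subseteq> semiring L by (rule sr)
sublocale zctx \<subseteq> comm_monoid L by (rule cm)
sublocale zctx \<subseteq> G: comm_group "units_of L" by (rule units_comm_group)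

context zctx
begin

lemma hc: "h x \<in> carrier L"
  using hhom by (auto simp: ring_hom_def)

lemma hmul: "h (zmax_mult x y) = h x \<otimes> h y"
  using hhom by (auto simp: ring_hom_def)

lemma hadd: "h (zmax_add x y) = h x \<oplus> h y"
  using hhom by (auto simp: ring_hom_def)

lemma h1: "h (Some 0) = \<one>"
  using hhom by (auto simp: ring_hom_def)

lemma hS: "h (Some (a + b)) = h (Some a) \<otimes> h (Some b)"
  using hmul[of "Some a" "Some b"] by simp

lemma hmax: "h (Some (max a b)) = h (Some a) \<oplus> h (Some b)"
  using hadd[of "Some a" "Some b"] by simp

lemma zero_ne_one: "\<zero> \<noteq> \<one>"
  using hinj h0 h1 by (metis inj_eq option.distinct(1))

lemma hUnits: "h (Some k) \<in> Units L"
proof -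
  have "h (Some k) \<otimes> h (Some (-k)) = \<one>" "h (Some (-k)) \<otimes> h (Some k) = \<one>"
    using hS[of k "-k"] hS[of "-k" k] h1 by auto
  then show ?thesis using hc unfolding Units_def by blast
qed

definition u where "u = h (Some 1)"

lemma uG: "u \<in> carrier (units_of L)"
  by (simp add: u_def hUnits units_of_carrier)

lemma hpow: "h (Some k) = u [^]\<^bsub>units_of L\<^esub> k"
proof (induction k rule: int_induct[where k=0])
  case base
  then show ?case by (simp add: h1 units_of_one)
next
  case (step1 i)
  have "h (Some (i+1)) = h (Some i) \<otimes> u" using hS u_def by simp
  also have "\<dots> = u [^]\<^bsub>units_of L\<^esub> i \<otimes>\<^bsub>units_of L\<^esub> u [^]\<^bsub>units_of L\<^esub> (1::int)"
    using step1 uG by (simp add: units_of_mult)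
  finally show ?case using G.int_pow_mult[OF uG] by simp
next
  case (step2 i)
  have e: "h (Some i) = h (Some (i - 1)) \<otimes>\<^bsub>units_of L\<^esub> u" using hS[of "i-1" 1] u_def
    by (simp add: units_of_mult)
  have c: "h (Some (i - 1)) \<in> carrier (units_of L)" by (simp add: hUnits units_of_carrier)
  have "h (Some (i - 1)) = h (Some i) \<otimes>\<^bsub>units_of L\<^esub> inv\<^bsub>units_of L\<^esub> u"
    using e c uG by (simp add: G.m_assoc)
  also have "\<dots> = u [^]\<^bsub>units_of L\<^esub> (i + (-1))"
    using step2 uG G.int_pow_mult[OF uG, of i "-1"] G.int_pow_neg[OF uG, of 1] by simp
  finally show ?case by simp
qed

lemma idem: "x \<in> carrier L \<Longrightarrow> x \<oplus> x = x"
proof -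
  assume x: "x \<in> carrier L"
  have "\<one> \<oplus> \<one> = \<one>" using hmax[of 0 0] h1 by simp
  then have "x \<otimes> (\<one> \<oplus> \<one>) = x" using x by simp
  then show ?thesis using x r_distr[of \<one> \<one> x] by simp
qed

lemma sum_zero: "a \<in> carrier L \<Longrightarrow> b \<in> carrier L \<Longrightarrow> a \<oplus> b = \<zero> \<Longrightarrow> a = \<zero>"
  by (metis a_assoc idem r_zero)

lemma zero_notU: "\<zero> \<notin> Units L"
  using zero_ne_one unfolding Units_def by auto

lemma add_Units: "a \<in> Units L \<Longrightarrow> b \<in> Units L \<Longrightarrow> a \<oplus> b \<in> Units L"
  by (metis Units_closed add.m_closed nzU sum_zero zero_notU)

abbreviation UG where "UG \<equiv> units_of L"

lemma UGc: "carrier UG = Units L" by (rule units_of_carrier)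
lemma UGm: "x \<otimes>\<^bsub>UG\<^esub> y = x \<otimes> y" by (simp add: units_of_mult)
lemma UGo: "\<one>\<^bsub>UG\<^esub> = \<one>" by (simp add: units_of_one)

lemma psum_c: "x \<in> carrier L \<Longrightarrow> psum L x k \<in> carrier L"
  by (induction k) auto

lemma psum_shift: "x \<in> carrier L \<Longrightarrow> x \<otimes> psum L x k \<oplus> \<one> = psum L x (Suc k)"
proof (induction k)
  case 0
  then show ?case by simp
next
  case (Suc k)
  have pc: "psum L x k \<in> carrier L" using psum_c[OF Suc.prems] .
  have "x \<otimes> psum L x (Suc k) = x \<otimes> psum L x k \<oplus> x [^] Suc k"
    using Suc.prems pc by (simp add: r_distr m_comm[of x "x [^] k"])
  then have "x \<otimes> psum L x (Suc k) \<oplus> \<one> = (x \<otimes> psum L x k \<oplus> \<one>) \<oplus> x [^] Suc k"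
    using Suc.prems pc by (simp add: a_ac)
  then show ?case using Suc by simp
qed

lemma torsion_nat:
  assumes x: "x \<in> Units L" and k: "x [^] (k::nat) = \<one>" "k > 0"
  shows "x = \<one>"
proof -
  obtain m where m: "k = Suc m" using k by (cases k) auto
  have xc: "x \<in> carrier L" using x by auto
  define s where "s = psum L x (Suc m)"
  have sc: "s \<in> carrier L" unfolding s_def by (rule psum_c[OF xc])
  have pc: "psum L x m \<in> carrier L" using psum_c[OF xc] by simp
  have "x \<otimes> s = x \<otimes> psum L x m \<oplus> x [^] Suc m"
    using xc pc by (simp add: s_def r_distr m_comm[of x "x [^] m"])
  also have "\<dots> = s" using psum_shift[OF xc, of m] k m s_def by simp
  finally have xs: "x \<otimes> s = s" .
  have e: "s = x \<otimes> psum L x m \<oplus> \<one>" using psum_shift[OF xc, of m] s_def by simp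
  have "s \<oplus> \<one> = x \<otimes> psum L x m \<oplus> (\<one> \<oplus> \<one>)" using e xc pc by (simp add: a_assoc)
  also have "\<dots> = s" using idem[of \<one>] e by simp
  finally have "s \<oplus> \<one> = s" .
  then have "s \<noteq> \<zero>" using zero_ne_one by auto
  then have sU: "s \<in> Units L" using nzU sc by auto
  have "x = x \<otimes> (s \<otimes> inv s)" using sU xc by simp
  also have "\<dots> = (x \<otimes> s) \<otimes> inv s" using sU xc sc by (simp add: m_assoc)
  also have "\<dots> = \<one>" using xs sU by simp
  finally show ?thesis .
qed

lemma torsion_int:
  assumes x: "x \<in> Units L" and k: "x [^]\<^bsub>UG\<^esub> (i::int) = \<one>" "i \<noteq> 0"
  shows "x = \<one>"
proof -
  have xg: "x \<in> carrier UG" using x UGc by simp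
  have "x [^]\<^bsub>UG\<^esub> nat \<bar>i\<bar> = \<one>\<^bsub>UG\<^esub>"
  proof (cases "i < 0")
    case True
    define y where "y = x [^]\<^bsub>UG\<^esub> nat (-i)"
    have yc: "y \<in> carrier UG" using xg y_def by simp
    have "x [^]\<^bsub>UG\<^esub> i = inv\<^bsub>UG\<^esub> y"
      using int_pow_def2[of UG x i] True unfolding y_def by (simp only: if_True)
    then have iy: "inv\<^bsub>UG\<^esub> y = \<one>\<^bsub>UG\<^esub>" using k UGo by simp
    have "y = inv\<^bsub>UG\<^esub> (inv\<^bsub>UG\<^esub> y)" using yc by (rule G.inv_inv[symmetric])
    also have "\<dots> = \<one>\<^bsub>UG\<^esub>" using iy by simp
    finally have "y = \<one>\<^bsub>UG\<^esub>" .
    moreover have "nat \<bar>i\<bar> = nat (-i)" using True by simp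
    ultimately show ?thesis using y_def by simp
  next
    case False
    then have "x [^]\<^bsub>UG\<^esub> i = x [^]\<^bsub>UG\<^esub> nat i"
      using int_pow_def2[of UG x i] by (simp only: if_False)
    moreover have "nat \<bar>i\<bar> = nat i" using False by simp
    ultimately show ?thesis using k UGo by simp
  qed
  moreover have "x [^]\<^bsub>UG\<^esub> nat \<bar>i\<bar> = x [^] nat \<bar>i\<bar>" by (rule units_of_pow[OF x])
  ultimately have "x [^] nat \<bar>i\<bar> = \<one>" using UGo by simp
  moreover have "nat \<bar>i\<bar> > 0" using k by simp
  ultimately show ?thesis by (rule torsion_nat[OF x])
qed

lemma pow_inj:
  assumes "x \<in> Units L" "y \<in> Units L" "x [^]\<^bsub>UG\<^esub> (i::int) = y [^]\<^bsub>UG\<^esub> i" "i \<noteq> 0"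
  shows "x = y"
proof -
  have xg: "x \<in> carrier UG" "y \<in> carrier UG" using assms UGc by auto
  have "(x \<otimes>\<^bsub>UG\<^esub> inv\<^bsub>UG\<^esub> y) [^]\<^bsub>UG\<^esub> i = \<one>\<^bsub>UG\<^esub>"
    using xg assms(3) by (simp add: G.int_pow_distrib G.int_pow_inv)
  then have "x \<otimes>\<^bsub>UG\<^esub> inv\<^bsub>UG\<^esub> y = \<one>\<^bsub>UG\<^esub>"
    using torsion_int[of "x \<otimes>\<^bsub>UG\<^esub> inv\<^bsub>UG\<^esub> y" i] xg assms(4) UGc UGo by auto
  then have "(x \<otimes>\<^bsub>UG\<^esub> inv\<^bsub>UG\<^esub> y) \<otimes>\<^bsub>UG\<^esub> y = y" using xg by simp
  then show ?thesis using xg by (simp add: G.m_assoc)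
qed


lemma hG: "h (Some k) \<in> carrier UG" using hUnits UGc by simp

lemma uinj: "u [^]\<^bsub>UG\<^esub> (a::int) = u [^]\<^bsub>UG\<^esub> b \<Longrightarrow> a = b"
  using hinj hpow[of a] hpow[of b] by (metis inj_eq option.inject)

definition N where "N = card (unit_cosets Zmax L h)"

lemma pow_in_H:
  assumes x: "x \<in> Units L"
  shows "\<exists>d k. 0 < d \<and> d \<le> N \<and> x [^]\<^bsub>UG\<^esub> (d::nat) = u [^]\<^bsub>UG\<^esub> (k::int)"
proof -
  define H where "H = h ` Units Zmax"
  have xg: "x \<in> carrier UG" using x UGc by simp
  define f where "f i = H #>\<^bsub>UG\<^esub> (x [^]\<^bsub>UG\<^esub> (i::nat))" for i
  have sub: "f ` {0..N} \<subseteq> unit_cosets Zmax L h"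
    unfolding unit_cosets_def RCOSETS_def f_def H_def using xg by auto
  have "\<not> inj_on f {0..N}"
  proof
    assume "inj_on f {0..N}"
    then have "card (f ` {0..N}) = Suc N" by (simp add: card_image)
    moreover have "card (f ` {0..N}) \<le> N" using card_mono[OF fin sub] N_def by simp
    ultimately show False by simp
  qed
  then obtain i j where ij: "i \<in> {0..N}" "j \<in> {0..N}" "i \<noteq> j" "f i = f j"
    unfolding inj_on_def by blast
  obtain a b where ab: "a < b" "b \<le> N" "f a = f b"
    using ij by (metis atLeastAtMost_iff linorder_neqE_nat)
  have oneH: "\<one>\<^bsub>UG\<^esub> \<in> H" unfolding H_def Units_Zmax using h1 UGo by (metis rangeI image_eqI)
  have "x [^]\<^bsub>UG\<^esub> b \<in> f b" unfolding f_def r_coset_def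
    using oneH xg by (auto intro!: bexI[of _ "\<one>\<^bsub>UG\<^esub>"])
  then have "x [^]\<^bsub>UG\<^esub> b \<in> f a" using ab by simp
  then obtain k where k: "x [^]\<^bsub>UG\<^esub> b = h (Some k) \<otimes>\<^bsub>UG\<^esub> x [^]\<^bsub>UG\<^esub> a"
    unfolding f_def r_coset_def H_def Units_Zmax by auto
  have "x [^]\<^bsub>UG\<^esub> b = x [^]\<^bsub>UG\<^esub> (b - a) \<otimes>\<^bsub>UG\<^esub> x [^]\<^bsub>UG\<^esub> a"
    using xg ab by (simp add: G.nat_pow_mult)
  then have "x [^]\<^bsub>UG\<^esub> (b - a) = h (Some k)" using k xg hG[of k] by simp
  then show ?thesis using ab hpow by (intro exI[of _ "b - a"] exI[of _ k]) auto
qed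

definition M :: int where "M = int (fact N)"

lemma M_pos: "M > 0" unfolding M_def by simp

lemma powM:
  assumes x: "x \<in> Units L"
  shows "\<exists>k. x [^]\<^bsub>UG\<^esub> M = u [^]\<^bsub>UG\<^esub> (k::int)"
proof -
  have xg: "x \<in> carrier UG" using x UGc by simp
  obtain d k where dk: "0 < d" "d \<le> N" "x [^]\<^bsub>UG\<^esub> (d::nat) = u [^]\<^bsub>UG\<^esub> (k::int)"
    using pow_in_H[OF x] by blast
  have "d dvd fact N" using dk by (simp add: dvd_fact)
  then obtain q where q: "fact N = d * q" by blast
  have "x [^]\<^bsub>UG\<^esub> M = x [^]\<^bsub>UG\<^esub> (int d * int q)" unfolding M_def q by simp
  also have "\<dots> = (x [^]\<^bsub>UG\<^esub> int d) [^]\<^bsub>UG\<^esub> int q" using G.int_pow_pow[OF xg] by simp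
  also have "\<dots> = (u [^]\<^bsub>UG\<^esub> k) [^]\<^bsub>UG\<^esub> int q" using dk by (simp add: int_pow_int)
  also have "\<dots> = u [^]\<^bsub>UG\<^esub> (k * int q)" using G.int_pow_pow[OF uG] by simp
  finally show ?thesis by blast
qed


definition g where "g x = (THE k. x [^]\<^bsub>UG\<^esub> M = u [^]\<^bsub>UG\<^esub> (k::int))"

lemma g_spec: "x \<in> Units L \<Longrightarrow> x [^]\<^bsub>UG\<^esub> M = u [^]\<^bsub>UG\<^esub> g x"
proof -
  assume x: "x \<in> Units L"
  obtain k where k: "x [^]\<^bsub>UG\<^esub> M = u [^]\<^bsub>UG\<^esub> (k::int)" using powM[OF x] by blast
  have "\<exists>!k. x [^]\<^bsub>UG\<^esub> M = u [^]\<^bsub>UG\<^esub> (k::int)"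
  proof (rule ex1I[of _ k])
    show "x [^]\<^bsub>UG\<^esub> M = u [^]\<^bsub>UG\<^esub> k" by (rule k)
    fix k' assume "x [^]\<^bsub>UG\<^esub> M = u [^]\<^bsub>UG\<^esub> (k'::int)"
    then show "k' = k" using k uinj by simp
  qed
  then show ?thesis unfolding g_def by (rule theI')
qed

lemma g_eq: "x \<in> Units L \<Longrightarrow> x [^]\<^bsub>UG\<^esub> M = u [^]\<^bsub>UG\<^esub> k \<Longrightarrow> g x = k"
proof -
  assume x: "x \<in> Units L" and k: "x [^]\<^bsub>UG\<^esub> M = u [^]\<^bsub>UG\<^esub> k"
  then have "u [^]\<^bsub>UG\<^esub> g x = u [^]\<^bsub>UG\<^esub> k" using g_spec[OF x] by simp
  then show ?thesis by (rule uinj)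
qed

lemma UGcl: "x \<in> Units L \<Longrightarrow> x [^]\<^bsub>UG\<^esub> (i::int) \<in> Units L"
  using G.int_pow_closed[of x i] UGc by simp

lemma g_mult: "x \<in> Units L \<Longrightarrow> y \<in> Units L \<Longrightarrow> g (x \<otimes>\<^bsub>UG\<^esub> y) = g x + g y"
proof -
  assume x: "x \<in> Units L" and y: "y \<in> Units L"
  have xy: "x \<otimes>\<^bsub>UG\<^esub> y \<in> Units L" using x y UGm by simp
  have "(x \<otimes>\<^bsub>UG\<^esub> y) [^]\<^bsub>UG\<^esub> M = x [^]\<^bsub>UG\<^esub> M \<otimes>\<^bsub>UG\<^esub> y [^]\<^bsub>UG\<^esub> M"
    using x y UGc by (simp add: G.int_pow_distrib)
  also have "\<dots> = u [^]\<^bsub>UG\<^esub> (g x + g y)" using g_spec[OF x] g_spec[OF y] G.int_pow_mult[OF uG] by simp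
  finally show ?thesis by (rule g_eq[OF xy])
qed

lemma g_pow: "x \<in> Units L \<Longrightarrow> g (x [^]\<^bsub>UG\<^esub> (i::int)) = i * g x"
proof -
  assume x: "x \<in> Units L"
  have xg: "x \<in> carrier UG" using x UGc by simp
  have "(x [^]\<^bsub>UG\<^esub> i) [^]\<^bsub>UG\<^esub> M = x [^]\<^bsub>UG\<^esub> (M * i)"
    using G.int_pow_pow[OF xg] by (simp add: mult.commute)
  also have "\<dots> = (x [^]\<^bsub>UG\<^esub> M) [^]\<^bsub>UG\<^esub> i" using G.int_pow_pow[OF xg] by simp
  also have "\<dots> = u [^]\<^bsub>UG\<^esub> (i * g x)" using g_spec[OF x] G.int_pow_pow[OF uG] by (simp add: mult.commute)
  finally show ?thesis by (rule g_eq[OF UGcl[OF x]])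
qed

lemma g_inj: "x \<in> Units L \<Longrightarrow> y \<in> Units L \<Longrightarrow> g x = g y \<Longrightarrow> x = y"
  using g_spec pow_inj M_pos by (metis less_irrefl)

lemma uU: "u \<in> Units L" using uG UGc by simp

lemma g_u: "g u = M" by (rule g_eq[OF uU]) simp

definition dn :: nat where "dn = (LEAST n. n > 0 \<and> (\<exists>x\<in>Units L. g x = int n))"

lemma dn_ex: "dn > 0 \<and> (\<exists>x\<in>Units L. g x = int dn)"
  unfolding dn_def
  by (rule LeastI[of _ "nat M"]) (use M_pos g_u uU in auto)

definition v where "v = (SOME x. x \<in> Units L \<and> g x = int dn)"

lemma v: "v \<in> Units L" "g v = int dn"
  using someI_ex[of "\<lambda>x. x \<in> Units L \<and> g x = int dn"] dn_ex v_def by auto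

lemma vG: "v \<in> carrier UG" using v UGc by simp

lemma gen: "x \<in> Units L \<Longrightarrow> \<exists>j. x = v [^]\<^bsub>UG\<^esub> (j::int)"
proof -
  assume x: "x \<in> Units L"
  define q where "q = g x div int dn"
  define r where "r = g x mod int dn"
  have dpos: "int dn > 0" using dn_ex by simp
  define y where "y = x \<otimes>\<^bsub>UG\<^esub> v [^]\<^bsub>UG\<^esub> (-q)"
  have yU: "y \<in> Units L" unfolding y_def using x UGcl[OF v(1)] UGm by simp
  have "g y = g x + (-q) * int dn" unfolding y_def using g_mult[OF x UGcl[OF v(1)]] g_pow[OF v(1)] v(2) by simp
  then have gy: "g y = r" unfolding r_def q_def by (simp add: minus_div_mult_eq_mod)
  have r0: "r \<ge> 0" "r < int dn" unfolding r_def using dpos by auto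
  have "r = 0"
  proof (rule ccontr)
    assume "r \<noteq> 0"
    then have "nat r > 0 \<and> (\<exists>x\<in>Units L. g x = int (nat r))" using r0 gy yU by auto
    then have "dn \<le> nat r" unfolding dn_def by (rule Least_le)
    then show False using r0 by simp
  qed
  then have "g x = g (v [^]\<^bsub>UG\<^esub> q)" using g_pow[OF v(1)] v(2) unfolding q_def r_def
    by (metis add.right_neutral mult_div_mod_eq mult.commute)
  then show ?thesis using g_inj[OF x UGcl[OF v(1)]] by blast
qed

lemma E_inj: "v [^]\<^bsub>UG\<^esub> (a::int) = v [^]\<^bsub>UG\<^esub> b \<Longrightarrow> a = b"
proof -
  assume "v [^]\<^bsub>UG\<^esub> (a::int) = v [^]\<^bsub>UG\<^esub> b"
  then have "a * int dn = b * int dn" using g_pow[OF v(1)] v(2) by metis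
  then show "a = b" using dn_ex by simp
qed

definition n :: int where "n = (SOME j. u = v [^]\<^bsub>UG\<^esub> j)"

lemma n: "u = v [^]\<^bsub>UG\<^esub> n" "n > 0"
proof -
  show un: "u = v [^]\<^bsub>UG\<^esub> n" unfolding n_def by (rule someI_ex) (rule gen[OF uU])
  have "M = n * int dn" using g_u g_pow[OF v(1)] v(2) un by simp
  then show "n > 0" using M_pos dn_ex by (simp add: zero_less_mult_iff)
qed

lemma h_E: "h (Some k) = v [^]\<^bsub>UG\<^esub> (n * k)"
  using hpow[of k] n(1) G.int_pow_pow[OF vG] by simp


lemma vL: "v \<in> carrier L" using v(1) by auto

definition E where "E k = v [^]\<^bsub>UG\<^esub> (k::int)"

lemma EU: "E k \<in> Units L" unfolding E_def by (rule UGcl[OF v(1)])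
lemma EL: "E k \<in> carrier L" using EU by auto
lemma Enz: "E k \<noteq> \<zero>" using EU[of k] zero_notU by force
lemma E_mult: "E a \<otimes> E b = E (a + b)"
  unfolding E_def using G.int_pow_mult[OF vG, of a b] UGm by simp
lemma E0: "E 0 = \<one>" unfolding E_def using UGo by simp
lemma E_inj': "E a = E b \<Longrightarrow> a = b" unfolding E_def by (rule E_inj)

lemma Enat: "k \<ge> 0 \<Longrightarrow> E k = v [^] (nat k)"
proof -
  assume k: "k \<ge> 0"
  have "v [^]\<^bsub>UG\<^esub> nat k = v [^]\<^bsub>UG\<^esub> k" using k by (rule pow_nat)
  moreover have "v [^]\<^bsub>UG\<^esub> nat k = v [^] nat k" by (rule units_of_pow[OF v(1)])
  ultimately show ?thesis unfolding E_def by simp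
qed

lemma one_le_u: "\<one> \<oplus> u = u"
  using hmax[of 0 1] h1 u_def by simp

lemma cancelU: "a \<in> carrier L \<Longrightarrow> b \<in> carrier L \<Longrightarrow> T \<in> Units L \<Longrightarrow> a \<otimes> T = b \<otimes> T \<Longrightarrow> a = b"
proof -
  assume a: "a \<in> carrier L" and b: "b \<in> carrier L" and T: "T \<in> Units L" and e: "a \<otimes> T = b \<otimes> T"
  have Tc: "T \<in> carrier L" "inv T \<in> carrier L" using T by auto
  have "a = (a \<otimes> T) \<otimes> inv T" using a T Tc by (simp add: m_assoc)
  also have "\<dots> = (b \<otimes> T) \<otimes> inv T" using e by simp
  also have "\<dots> = b" using b T Tc by (simp add: m_assoc)
  finally show ?thesis .
qed

lemma one_v: "\<one> \<oplus> v = v"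
proof -
  obtain m where m: "nat n = Suc m" using n(2) by (metis gr0_implies_Suc zero_less_nat_eq)
  have uL: "u = v [^] (Suc m)" using n(1) Enat[of n] n(2) m unfolding E_def by simp
  define P where "P = psum L v m"
  define T where "T = psum L v (Suc m)"
  have Pc: "P \<in> carrier L" unfolding P_def by (rule psum_c[OF vL])
  have Tc: "T \<in> carrier L" unfolding T_def by (rule psum_c[OF vL])
  have vP: "v \<otimes> P \<in> carrier L" using Pc vL by simp
  have hT: "T = v \<otimes> P \<oplus> \<one>" unfolding T_def P_def using psum_shift[OF vL, of m] by simp
  have hvT: "v \<otimes> T = v \<otimes> P \<oplus> u"
    unfolding T_def uL using vL Pc by (simp add: r_distr P_def m_comm[of v "v [^] m"])
  have uc: "u \<in> carrier L" using uU by auto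
  have "T \<oplus> v \<otimes> T = (v \<otimes> P \<oplus> v \<otimes> P) \<oplus> (\<one> \<oplus> u)"
    using hT hvT vP uc by (simp add: a_ac)
  also have "\<dots> = v \<otimes> T" using idem[OF vP] one_le_u hvT by simp
  finally have s1: "T \<oplus> v \<otimes> T = v \<otimes> T" .
  have "T \<oplus> \<one> = v \<otimes> P \<oplus> (\<one> \<oplus> \<one>)" using hT vP by (simp add: a_assoc)
  also have "\<dots> = T" using idem[of \<one>] hT by simp
  finally have "T \<oplus> \<one> = T" .
  then have "T \<noteq> \<zero>" using zero_ne_one by auto
  then have TU: "T \<in> Units L" using nzU Tc by auto
  have "(\<one> \<oplus> v) \<otimes> T = T \<oplus> v \<otimes> T" using Tc vL by (simp add: l_distr)
  then have "(\<one> \<oplus> v) \<otimes> T = v \<otimes> T" using s1 by simp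
  then show ?thesis using cancelU[OF _ vL TU] vL by simp
qed

lemma one_vk: "\<one> \<oplus> v [^] (k::nat) = v [^] k"
proof (induction k)
  case 0
  then show ?case using idem[of \<one>] by simp
next
  case (Suc k)
  have c: "v [^] k \<in> carrier L" "v [^] Suc k \<in> carrier L" using vL by auto
  have "v [^] Suc k = v \<otimes> (\<one> \<oplus> v [^] k)" using Suc vL by (simp add: m_comm[of v "v [^] k"])
  also have "\<dots> = v \<oplus> v [^] Suc k" using vL c by (simp add: r_distr m_comm[of v "v [^] k"])
  finally have e: "v [^] Suc k = v \<oplus> v [^] Suc k" .
  have "\<one> \<oplus> v [^] Suc k = (\<one> \<oplus> v) \<oplus> v [^] Suc k" using e vL c by (metis a_assoc one_closed)
  also have "\<dots> = v [^] Suc k" using one_v e by simp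
  finally show ?case .
qed

lemma E_le: "a \<le> b \<Longrightarrow> E a \<oplus> E b = E b"
proof -
  assume ab: "a \<le> b"
  have w: "E (b - a) = v [^] nat (b - a)" using ab by (intro Enat) simp
  have wc: "E (b - a) \<in> carrier L" by (rule EL)
  have eb: "E b = E a \<otimes> E (b - a)" using E_mult[of a "b - a"] by simp
  have "E a \<oplus> E b = E a \<otimes> (\<one> \<oplus> E (b - a))" using eb EL wc by (simp add: r_distr)
  also have "\<dots> = E b" using one_vk w eb by simp
  finally show ?thesis .
qed

lemma E_add: "E a \<oplus> E b = E (max a b)"
proof (cases "a \<le> b")
  case True then show ?thesis using E_le by (simp add: max_def)
next
  case False then show ?thesis using E_le[of b a] EL by (simp add: max_def a_comm)
qed

lemma elem_cases: "x \<in> carrier L \<Longrightarrow> x = \<zero> \<or> (\<exists>k. x = E k)"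
  using nzU gen unfolding E_def by blast

definition phi where "phi x = (if x = \<zero> then None else Some (THE k. E k = x))"

lemma phiE: "phi (E k) = Some k"
  unfolding phi_def using Enz E_inj' by (simp add: the_equality)

lemma phi0: "phi \<zero> = None" unfolding phi_def by simp

lemma phi_mult: "x \<in> carrier L \<Longrightarrow> y \<in> carrier L \<Longrightarrow> phi (x \<otimes> y) = zmax_mult (phi x) (phi y)"
  using elem_cases[of x] elem_cases[of y]
  by (auto simp: phi0 phiE E_mult EL)

lemma phi_add: "x \<in> carrier L \<Longrightarrow> y \<in> carrier L \<Longrightarrow> phi (x \<oplus> y) = zmax_add (phi x) (phi y)"
  using elem_cases[of x] elem_cases[of y]
  by (auto simp: phi0 phiE E_add EL)

lemma main: "\<exists>n::int. n > 0 \<and> (\<exists>\<phi>. ext_iso Zmax L h Zmax (Fn_emb n) \<phi>)"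
proof (intro exI conjI)
  show "n > 0" by (rule n(2))
  have hom: "phi \<in> semiring_hom L Zmax"
    unfolding semiring_hom_def ring_hom_def
    using phi_mult phi_add phi0 phiE[of 0] E0 by auto
  have inj: "inj_on phi (carrier L)"
  proof (rule inj_onI)
    fix x y assume x: "x \<in> carrier L" and y: "y \<in> carrier L" and e: "phi x = phi y"
    show "x = y" using elem_cases[OF x] elem_cases[OF y] e by (auto simp: phi0 phiE)
  qed
  have surj: "phi ` carrier L = carrier Zmax"
  proof -
    have "z \<in> phi ` carrier L" for z
    proof (cases z)
      case None then show ?thesis using phi0 by (metis zero_closed image_eqI)
    next
      case (Some k) then show ?thesis using phiE EL by (metis image_eqI)
    qed
    then show ?thesis by auto
  qed
  have comp: "\<forall>x\<in>carrier Zmax. phi (h x) = Fn_emb n x"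
  proof
    fix x show "phi (h x) = Fn_emb n x"
    proof (cases x)
      case None then show ?thesis using h0 phi0 by (simp add: Fn_emb_def)
    next
      case (Some k) then show ?thesis using h_E phiE by (simp add: Fn_emb_def E_def)
    qed
  qed
  show "ext_iso Zmax L h Zmax (Fn_emb n) phi"
    unfolding ext_iso_def bij_betw_def using hom inj surj comp by blast
qed

end

theorem mainTheorem4:
  fixes L :: "('a, 'b) ring_scheme" and h :: "int option \<Rightarrow> 'a"
  assumes "semifield_ext Zmax L h"
    and "finite (unit_cosets Zmax L h)"
  shows "\<exists>n::int. n > 0 \<and> (\<exists>\<phi>. ext_iso Zmax L h Zmax (Fn_emb n) \<phi>)"
  using zctx.main[of L h] assms unfolding zctx_def by blast

end
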